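(* Let $N$ be an odd positive integer, let $p$ be the smallest prime factor of $N$, and let $K\ge N$ be a positive integer. Let $a_2,a_1\in\mathbb{Z}_N$ with $\gcd(a_2,N)=1$, and let $g:\mathbb{Z}_N\to\mathbb{Z}_N$, $g(x)=a_2x^2+a_1x$. Let $\phi:\mathbb{Z}_N\to\mathbb{Z}_K$ send the residue class of $x\in\{0,1,\dots,N-1\}$ to the residue class of the same integer $x$ modulo $K$, and let $f=\phi\circ g:\mathbb{Z}_N\to\mathbb{Z}_K$. For integers $a,b$ consider the equation $f(x+a)-f(x)=b$ in the unknown $x\in\mathbb{Z}_N$, where $x+a$ is computed in $\mathbb{Z}_N$ and the equation is read in $\mathbb{Z}_K$. Then: (1) if $K=N$, for every integer $a$ with $-p<a<p$, $a\neq 0$, and every integer $b$ with $-N<b<N$, the equation has at most one solution $x\in\mathbb{Z}_N$; (2) if $N<K<2N-1$, for every integer $a$ with $-p<a<p$, $a\ne 0$, and every integer $b$ with $-K+N-1<b<K-N+1$, the equation has at most one solution $x\in\mathbb{Z}_N$; (3) if $K\ge 2N-1$, for every integer $a$ with $-p<a<p$, $a\neq 0$, and every integer $b$ with $-K<b<K$, the equation has at most one solution $x\in\mathbb{Z}_N$.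
   Context: $\mathbb{Z}_N$ denotes the ring of integers modulo $N$. *)

theory Defs
  imports "HOL-Computational_Algebra.Primes"
begin

text \<open>Elements of Z_N are represented by their canonical integer representatives in
  {0..<N}; the map g : Z_N -> Z_N, g(x) = a2 x^2 + a1 x.\<close>
definition qg :: "int \<Rightarrow> int \<Rightarrow> int \<Rightarrow> int \<Rightarrow> int" where
  "qg N a2 a1 x = (a2 * x^2 + a1 * x) mod N"

definition qf :: "int \<Rightarrow> int \<Rightarrow> int \<Rightarrow> int \<Rightarrow> int \<Rightarrow> int" where
  "qf N K a2 a1 x = (qg N a2 a1 x) mod K"

definition sols :: "int \<Rightarrow> int \<Rightarrow> int \<Rightarrow> int \<Rightarrow> int \<Rightarrow> int \<Rightarrow> int set" where
  "sols N K a2 a1 a b = {x \<in> {0..<N}.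
     (qf N K a2 a1 ((x + a) mod N) - qf N K a2 a1 x) mod K = b mod K}"

end

theory Submission
  imports Defs "HOL-Number_Theory.Cong"
begin

lemma qf_eq: assumes "N > 0" "K \<ge> N" shows "qf N K a2 a1 x = qg N a2 a1 x"
proof -
  have "0 \<le> (a2 * x^2 + a1 * x) mod N" "(a2 * x^2 + a1 * x) mod N < K"
    using assms by (simp, smt (verit) pos_mod_bound)
  then show ?thesis unfolding qf_def qg_def by (rule mod_pos_pos_trivial)
qed

lemma qg_range: assumes "N > 0" shows "0 \<le> qg N a2 a1 x \<and> qg N a2 a1 x < N"
  using assms unfolding qg_def by simp

lemma coprime_small:
  fixes N p a :: int
  assumes "N > 0" "prime p" "\<And>q. prime q \<Longrightarrow> q dvd N \<Longrightarrow> p \<le> q"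
    "-p < a" "a < p" "a \<noteq> 0"
  shows "coprime a N"
proof (rule ccontr)
  assume "\<not> coprime a N"
  then have "gcd a N \<noteq> 1" by (simp add: coprime_iff_gcd_eq_1)
  moreover have "gcd a N \<ge> 0" by simp
  ultimately have "\<not> is_unit (gcd a N)" by simp
  then obtain q where q: "prime q" "q dvd gcd a N"
    using prime_divisor_exists[of "gcd a N"] assms(6) by auto
  then have "q dvd a" "q dvd N" by auto
  then have "p \<le> q" using assms(3) q by auto
  have "q > 0" using q prime_gt_0_int by blast
  have "\<bar>q\<bar> \<le> \<bar>a\<bar>" using \<open>q dvd a\<close> assms(6) by (rule_tac dvd_imp_le_int) auto
  then have "q \<le> \<bar>a\<bar>" using \<open>q>0\<close> by simp
  then show False using \<open>p \<le> q\<close> assms(4,5) by linarith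
qed

lemma diff_cong:
  assumes "N > 0" "K \<ge> N"
  shows "[qf N K a2 a1 ((x + a) mod N) - qf N K a2 a1 x = 2*a*a2*x + (a2*a^2 + a1*a)] (mod N)"
proof -
  have "[qf N K a2 a1 ((x + a) mod N) = a2 * ((x+a) mod N)^2 + a1 * ((x+a) mod N)] (mod N)"
    using assms by (simp add: qf_eq qg_def cong_def)
  also have "[a2 * ((x+a) mod N)^2 + a1 * ((x+a) mod N) = a2 * (x+a)^2 + a1 * (x+a)] (mod N)"
    by (intro cong_add cong_mult cong_pow cong_refl) (simp_all add: cong_def)
  finally have 1: "[qf N K a2 a1 ((x + a) mod N) = a2 * (x+a)^2 + a1 * (x+a)] (mod N)" .
  have 2: "[qf N K a2 a1 x = a2 * x^2 + a1 * x] (mod N)"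
    using assms by (simp add: qf_eq qg_def cong_def)
  have "[qf N K a2 a1 ((x + a) mod N) - qf N K a2 a1 x = (a2 * (x+a)^2 + a1 * (x+a)) - (a2 * x^2 + a1 * x)] (mod N)"
    by (rule cong_diff[OF 1 2])
  moreover have "(a2 * (x+a)^2 + a1 * (x+a)) - (a2 * x^2 + a1 * x) = 2*a*a2*x + (a2*a^2 + a1*a)"
    by (simp add: power2_eq_square algebra_simps)
  ultimately show ?thesis by simp
qed

lemma key:
  fixes N K p a2 a1 a x y :: int
  assumes "N > 0" "odd N" "prime p" "\<And>q. prime q \<Longrightarrow> q dvd N \<Longrightarrow> p \<le> q"
    "K \<ge> N" "gcd a2 N = 1" "-p < a" "a < p" "a \<noteq> 0"
    "x \<in> {0..<N}" "y \<in> {0..<N}"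
    "[qf N K a2 a1 ((x + a) mod N) - qf N K a2 a1 x = qf N K a2 a1 ((y + a) mod N) - qf N K a2 a1 y] (mod N)"
  shows "x = y"
proof -
  have "[2*a*a2*x + (a2*a^2 + a1*a) = 2*a*a2*y + (a2*a^2 + a1*a)] (mod N)"
    using diff_cong[OF assms(1,5), of a2 a1 x a] diff_cong[OF assms(1,5), of a2 a1 y a] assms(12)
    by (meson cong_sym cong_trans)
  then have c: "[2*a*a2*x = 2*a*a2*y] (mod N)" by (simp add: cong_add_rcancel)
  have ca: "coprime a N" using coprime_small[OF assms(1,3,4,7,8,9)] .
  have c2: "coprime 2 N" using assms(2) by simp
  have c3: "coprime a2 N" using assms(6) by (simp add: coprime_iff_gcd_eq_1)
  have "coprime (2*a*a2) N" using ca c2 c3 by simp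
  then have "[x = y] (mod N)" using c cong_mult_lcancel by blast
  then show ?thesis using assms(10,11) by (simp add: cong_def mod_pos_pos_trivial)
qed

lemma dvd_small_zero:
  fixes K z :: int assumes "K dvd z" "\<bar>z\<bar> < K" shows "z = 0"
proof (rule ccontr)
  assume "z \<noteq> 0"
  then have "\<bar>K\<bar> \<le> \<bar>z\<bar>" using assms(1) by (rule_tac dvd_imp_le_int) auto
  then show False using assms(2) by linarith
qed

theorem lemma3:
  fixes N K p a2 a1 :: int
  assumes "N > 0" and "odd N"
    and "prime p" and "p dvd N" and "\<And>q. prime q \<Longrightarrow> q dvd N \<Longrightarrow> p \<le> q"
    and "K \<ge> N"
    and "a2 \<in> {0..<N}" and "a1 \<in> {0..<N}" and "gcd a2 N = 1"
  shows "(K = N \<longrightarrow> (\<forall>a b. -p < a \<and> a < p \<and> a \<noteq> 0 \<and> -N < b \<and> b < N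
            \<longrightarrow> card (sols N K a2 a1 a b) \<le> 1))
       \<and> (N < K \<and> K < 2*N - 1 \<longrightarrow> (\<forall>a b. -p < a \<and> a < p \<and> a \<noteq> 0
            \<and> -K + N - 1 < b \<and> b < K - N + 1
            \<longrightarrow> card (sols N K a2 a1 a b) \<le> 1))
       \<and> (K \<ge> 2*N - 1 \<longrightarrow> (\<forall>a b. -p < a \<and> a < p \<and> a \<noteq> 0 \<and> -K < b \<and> b < K
            \<longrightarrow> card (sols N K a2 a1 a b) \<le> 1))"
proof -
  define d where "d a x = qf N K a2 a1 ((x + a) mod N) - qf N K a2 a1 x" for a x
  have drange: "-N < d a x \<and> d a x < N" for a x
    using qg_range[OF assms(1), of a2 a1] qf_eq[OF assms(1,6)] unfolding d_def by (smt (verit))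
  have fin: "finite (sols N K a2 a1 a b)" for a b unfolding sols_def by (rule finite_subset[of _ "{0..<N}"]) auto
  have main: "card (sols N K a2 a1 a b) \<le> 1"
    if a: "-p < a" "a < p" "a \<noteq> 0"
      and H: "\<And>x y. x \<in> {0..<N} \<Longrightarrow> y \<in> {0..<N} \<Longrightarrow> d a x mod K = b mod K \<Longrightarrow> d a y mod K = b mod K
               \<Longrightarrow> [d a x = d a y] (mod N)" for a b
  proof -
    have "\<forall>x\<in>sols N K a2 a1 a b. \<forall>y\<in>sols N K a2 a1 a b. x = y"
    proof (intro ballI)
      fix x y assume "x \<in> sols N K a2 a1 a b" "y \<in> sols N K a2 a1 a b"
      then have xy: "x \<in> {0..<N}" "y \<in> {0..<N}" "d a x mod K = b mod K" "d a y mod K = b mod K"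
        unfolding sols_def d_def by auto
      show "x = y"
        using key[OF assms(1,2,3,5,6,9) a xy(1,2)] H[OF xy] unfolding d_def by blast
    qed
    then show ?thesis using card_le_Suc0_iff_eq[OF fin[of a b]] by simp
  qed
  have K0: "K > 0" using assms by simp
  show ?thesis
  proof (intro conjI impI allI)
    fix a b assume K: "K = N" and ab: "-p < a \<and> a < p \<and> a \<noteq> 0 \<and> -N < b \<and> b < N"
    show "card (sols N K a2 a1 a b) \<le> 1"
      by (rule main) (use ab K in \<open>auto simp: cong_def\<close>)
  next
    fix a b assume K: "N < K \<and> K < 2*N - 1" and ab: "-p < a \<and> a < p \<and> a \<noteq> 0
            \<and> -K + N - 1 < b \<and> b < K - N + 1"
    show "card (sols N K a2 a1 a b) \<le> 1"
    proof (rule main)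
      fix x y assume "d a x mod K = b mod K" "d a y mod K = b mod K"
      moreover have "\<And>z. d a z mod K = b mod K \<Longrightarrow> d a z = b"
      proof -
        fix z assume "d a z mod K = b mod K"
        then have "K dvd (d a z - b)" by (simp add: mod_eq_dvd_iff)
        moreover have "\<bar>d a z - b\<bar> < K" using drange[of a z] ab by linarith
        ultimately show "d a z = b" using dvd_small_zero by fastforce
      qed
      ultimately have "d a x = d a y" by metis
      then show "[d a x = d a y] (mod N)" by simp
    qed (use ab in auto)
  next
    fix a b assume K: "K \<ge> 2*N - 1" and ab: "-p < a \<and> a < p \<and> a \<noteq> 0 \<and> -K < b \<and> b < K"
    show "card (sols N K a2 a1 a b) \<le> 1"
    proof (rule main)
      fix x y assume "d a x mod K = b mod K" "d a y mod K = b mod K"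
      then have "K dvd (d a x - d a y)" by (metis mod_eq_dvd_iff)
      moreover have "\<bar>d a x - d a y\<bar> < K" using drange[of a x] drange[of a y] K by linarith
      ultimately have "d a x = d a y" using dvd_small_zero by fastforce
      then show "[d a x = d a y] (mod N)" by simp
    qed (use ab in auto)
  qed
qed

end
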